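(* Let $P=2$ and let $X=WH$ with $W=(w_{mp})\in\mathbb{H}_{\mathcal S}^{M\times 2}$ and $H=(h_{pn})\in\mathbb{R}_+^{2\times N}$. Suppose: (C1) there exist $m_1,m_2\in\{1,\dots,M\}$ (not necessarily distinct) such that $I_{m_1 1},I_{m_1 2},I_{m_2 1},I_{m_2 2}>0$ and $$\Phi_{m_1 1}=1,\quad \Phi_{m_1 2}\boldsymbol\mu_{m_1 2}\neq\boldsymbol\mu_{m_1 1},\quad I_{m_1 1}\ge \frac12\,\frac{1-\Phi_{m_1 2}^2}{1-\Phi_{m_1 2}\langle\boldsymbol\mu_{m_1 1},\boldsymbol\mu_{m_1 2}\rangle}\,I_{m_1 2},$$ $$\Phi_{m_2 2}=1,\quad \Phi_{m_2 1}\boldsymbol\mu_{m_2 1}\neq\boldsymbol\mu_{m_2 2},\quad I_{m_2 2}\ge \frac12\,\frac{1-\Phi_{m_2 1}^2}{1-\Phi_{m_2 1}\langle\boldsymbol\mu_{m_2 2},\boldsymbol\mu_{m_2 1}\rangle}\,I_{m_2 1};$$ (C2) there exist $n_1\neq n_2$ in $\{1,\dots,N\}$ with $h_{1n_1}>0$, $h_{2n_1}=0$, $h_{2n_2}>0$, $h_{1n_2}=0$. Then the QNMF $X=WH$ is essentially unique.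
   Context: $\mathbb{H}$ denotes the quaternions; for $q=a+b\mathbf i+c\mathbf j+d\mathbf k$, $\mathrm{Re}\,q=a$, $\mathrm{Im}\,q=b\mathbf i+c\mathbf j+d\mathbf k$, $|\mathrm{Im}\,q|^2=b^2+c^2+d^2$. $\mathbb{H}_{\mathcal S}=\{q\in\mathbb{H}: \mathrm{Re}\,q\ge 0,\ |\mathrm{Im}\,q|^2\le(\mathrm{Re}\,q)^2\}$; $\mathbb{R}_+=[0,\infty)$. Polar parametrization: every $w\in\mathbb{H}_{\mathcal S}$ with $\mathrm{Re}\,w>0$ is written $w=I+I\Phi\boldsymbol\mu$ with intensity $I=\mathrm{Re}\,w>0$, degree of polarization $\Phi=|\mathrm{Im}\,w|/\mathrm{Re}\,w\in[0,1]$, and polarization axis $\boldsymbol\mu$ a pure unit quaternion ($\mathrm{Re}\,\boldsymbol\mu=0$, $|\boldsymbol\mu|=1$), with $\boldsymbol\mu=\mathrm{Im}\,w/|\mathrm{Im}\,w|$ when $\mathrm{Im}\,w\ne0$ (arbitrary otherwise). For the entries of $W$ we write $w_{mp}=I_{mp}+I_{mp}\Phi_{mp}\boldsymbol\mu_{mp}$. For pure quaternions, $\langle\boldsymbol\mu_1,\boldsymbol\mu_2\rangle=-\mathrm{Re}(\boldsymbol\mu_1\boldsymbol\mu_2)$, the Euclidean inner product in $\mathbb{R}^3$. The QNMF $X=WH$ is essentially unique if for every $\tilde W\in\mathbb{H}_{\mathcal S}^{M\times P}$, $\tilde H\in\mathbb{R}_+^{P\times N}$ with $X=\tilde W\tilde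 H$ there exist a diagonal matrix $D$ with strictly positive diagonal entries and a permutation matrix $\Pi$ such that $\tilde W=WD\Pi$ and $\tilde H=(D\Pi)^{-1}H$. *)

theory Defs
  imports "HOL-Analysis.Analysis" "HOL-Analysis.Cross3"
begin

text \<open>Quaternions q = a + b i + c j + d k are represented as pairs (Re q, Im q) with
  Im q :: real^3 the vector (b,c,d).\<close>

type_synonym quat = "real \<times> (real^3)"

definition qRe :: "quat \<Rightarrow> real" where "qRe q = fst q"
definition qIm :: "quat \<Rightarrow> real^3" where "qIm q = snd q"

definition qmult :: "quat \<Rightarrow> quat \<Rightarrow> quat" where
  "qmult p q = (fst p * fst q - snd p \<bullet> snd q,
                fst p *\<^sub>R snd q + fst q *\<^sub>R snd p + cross3 (snd p) (snd q))"

text \<open>Inner product of pure quaternions: -Re(mu1 mu2).\<close>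
definition qinner :: "quat \<Rightarrow> quat \<Rightarrow> real" where
  "qinner a b = - qRe (qmult a b)"

definition in_HS :: "quat \<Rightarrow> bool" where
  "in_HS q \<longleftrightarrow> qRe q \<ge> 0 \<and> (norm (qIm q))\<^sup>2 \<le> (qRe q)\<^sup>2"

text \<open>Polar parametrization w = I + I Phi mu.\<close>
definition intens :: "quat \<Rightarrow> real" where "intens q = qRe q"
definition dop :: "quat \<Rightarrow> real" where "dop q = norm (qIm q) / qRe q"
definition polaxis :: "quat \<Rightarrow> quat" where
  "polaxis q = (if qIm q = 0 then (0, axis 1 1) else (0, (1 / norm (qIm q)) *\<^sub>R qIm q))"

text \<open>Matrix product X = W H with W an M x P quaternion matrix and H a real P x N matrix
  (0-based indices; only entries within bounds are meaningful).\<close>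
definition qmatmul :: "nat \<Rightarrow> (nat \<Rightarrow> nat \<Rightarrow> quat) \<Rightarrow> (nat \<Rightarrow> nat \<Rightarrow> real) \<Rightarrow> nat \<Rightarrow> nat \<Rightarrow> quat" where
  "qmatmul P W H m n = (\<Sum>p<P. H p n *\<^sub>R W m p)"

text \<open>For a diagonal D = diag(d) and permutation
  matrix Pi with Pi_{q p} = 1 iff q = sigma p:
  (W D Pi)_{m p} = d_{sigma p} W_{m, sigma p},  ((D Pi)^{-1} H)_{p n} = H_{sigma p, n} / d_{sigma p}.\<close>
definition ess_unique :: "nat \<Rightarrow> nat \<Rightarrow> nat \<Rightarrow> (nat \<Rightarrow> nat \<Rightarrow> quat) \<Rightarrow> (nat \<Rightarrow> nat \<Rightarrow> real) \<Rightarrow> bool" where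
  "ess_unique M P N W H \<longleftrightarrow>
    (\<forall>W' H'. (\<forall>m<M. \<forall>p<P. in_HS (W' m p)) \<and> (\<forall>p<P. \<forall>n<N. H' p n \<ge> 0) \<and>
       (\<forall>m<M. \<forall>n<N. qmatmul P W' H' m n = qmatmul P W H m n) \<longrightarrow>
       (\<exists>d \<sigma>. (\<forall>p<P. d p > 0) \<and> \<sigma> permutes {..<P} \<and>
          (\<forall>m<M. \<forall>p<P. W' m p = d (\<sigma> p) *\<^sub>R W m (\<sigma> p)) \<and>
          (\<forall>p<P. \<forall>n<N. H' p n = H (\<sigma> p) n / d (\<sigma> p))))"

end

theory Submission imports Defs begin


lemma qmatmul2: "qmatmul 2 W H m n = H 0 n *\<^sub>R W m 0 + H 1 n *\<^sub>R W m 1"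
  by (simp add: qmatmul_def numeral_2_eq_2)

lemma HS_scale: assumes "in_HS q" "a \<ge> 0" shows "in_HS (a *\<^sub>R q)"
proof -
  have "(norm (snd q))\<^sup>2 \<le> (fst q)\<^sup>2" "fst q \<ge> 0" using assms by (auto simp: in_HS_def qRe_def qIm_def)
  then have "a\<^sup>2 * (norm (snd q))\<^sup>2 \<le> a\<^sup>2 * (fst q)\<^sup>2" by (simp add: mult_left_mono)
  then show ?thesis using assms by (auto simp: in_HS_def qRe_def qIm_def power_mult_distrib)
qed

lemma extreme:
  assumes "in_HS u" "in_HS v" "norm (qIm (u+v)) = qRe (u+v)"
  shows "\<exists>t. u = t *\<^sub>R (u+v)"
proof -
  obtain r x where u: "u = (r,x)" by (cases u) auto
  obtain s y where v: "v = (s,y)" by (cases v) auto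
  have r: "r \<ge> 0" "(norm x)\<^sup>2 \<le> r\<^sup>2" using assms(1) u by (auto simp: in_HS_def qRe_def qIm_def)
  have s: "s \<ge> 0" "(norm y)\<^sup>2 \<le> s\<^sup>2" using assms(2) v by (auto simp: in_HS_def qRe_def qIm_def)
  have nx: "norm x \<le> r" using r power2_le_imp_le by blast
  have ny: "norm y \<le> s" using s power2_le_imp_le by blast
  have eq: "norm (x+y) = r + s" using assms(3) u v by (simp add: qRe_def qIm_def)
  have "norm (x+y) \<le> norm x + norm y" by (rule norm_triangle_ineq)
  then have "norm x = r" "norm y = s" using nx ny eq by linarith+
  then have "norm (x+y) = norm x + norm y" using eq by simp
  then have ry: "r *\<^sub>R y = s *\<^sub>R x" using norm_triangle_eq \<open>norm x = r\<close> \<open>norm y = s\<close> by metis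
  show ?thesis
  proof (cases "r + s = 0")
    case True
    then have "r = 0" using r s by linarith
    then have "x = 0" using \<open>norm x = r\<close> by simp
    then show ?thesis using u \<open>r = 0\<close> by (intro exI[of _ 0]) (simp add: zero_prod_def)
  next
    case False
    define t where "t = r / (r+s)"
    have "t * (r+s) = r" using False by (simp add: t_def)
    moreover have "t *\<^sub>R (x + y) = x"
    proof -
      have "(r+s) *\<^sub>R (t *\<^sub>R (x + y)) = r *\<^sub>R x + r *\<^sub>R y" using \<open>t * (r+s) = r\<close>
        by (simp add: scaleR_add_right mult.commute)
      also have "\<dots> = (r+s) *\<^sub>R x" using ry by (simp add: scaleR_add_left)
      finally have "(r+s) *\<^sub>R (t *\<^sub>R (x + y)) = (r+s) *\<^sub>R x" .
      then show ?thesis using False scaleR_cancel_left by blast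
    qed
    ultimately show ?thesis using u v by (intro exI[of _ t]) (simp add: algebra_simps)
  qed
qed

lemma bd: assumes "qRe w > 0" "dop w = 1" shows "norm (qIm w) = qRe w"
  using assms by (simp add: dop_def field_simps)

lemma nonmult:
  assumes "qRe w0 > 0" "qRe w1 > 0" "dop w0 = 1" "dop w1 *\<^sub>R polaxis w1 \<noteq> polaxis w0"
  shows "w1 \<noteq> t *\<^sub>R w0"
proof
  assume w1: "w1 = t *\<^sub>R w0"
  have "qRe w1 = t * qRe w0" using w1 by (simp add: qRe_def)
  then have t: "t > 0" using assms(1,2) by (metis zero_less_mult_pos2)
  have n0: "norm (qIm w0) = qRe w0" using bd assms by blast
  have i1: "qIm w1 = t *\<^sub>R qIm w0" using w1 by (simp add: qIm_def)
  have i0: "qIm w0 \<noteq> 0" using n0 assms(1) by auto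
  have d1: "dop w1 = 1" using t n0 assms(1) i1 \<open>qRe w1 = t * qRe w0\<close> by (simp add: dop_def)
  have "polaxis w1 = polaxis w0" using t i0 i1 by (simp add: polaxis_def)
  then show False using assms(4) d1 by simp
qed

lemma indep:
  assumes "w0 \<noteq> 0" "\<forall>t. w1 \<noteq> t *\<^sub>R w0" "k0 *\<^sub>R w0 + k1 *\<^sub>R w1 = (0::quat)"
  shows "k0 = 0 \<and> k1 = 0"
proof -
  have "k1 = 0"
  proof (rule ccontr)
    assume "k1 \<noteq> 0"
    have "k1 *\<^sub>R w1 = (- k0) *\<^sub>R w0" using assms(3)
      by (simp add: eq_neg_iff_add_eq_0 add.commute)
    then have "(1/k1) *\<^sub>R (k1 *\<^sub>R w1) = (1/k1) *\<^sub>R ((- k0) *\<^sub>R w0)" by simp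
    then have "w1 = (- k0 / k1) *\<^sub>R w0" using \<open>k1 \<noteq> 0\<close> by simp
    then show False using assms(2) by blast
  qed
  then show ?thesis using assms by simp
qed

lemma solve_sc: "(a::real) \<noteq> 0 \<Longrightarrow> a *\<^sub>R x = y \<Longrightarrow> x = (1/a) *\<^sub>R (y::'a::real_vector)"
  by auto

lemma perm2: "(\<lambda>p::nat. if p = 0 then 1 else if p = 1 then 0 else p) permutes {..<2}"
proof -
  have "(\<lambda>p::nat. if p = 0 then 1 else if p = 1 then 0 else p) = Transposition.transpose 0 1"
    by (auto simp: Transposition.transpose_def)
  then show ?thesis using permutes_swap_id[of 0 "{..<2::nat}" 1] by simp
qed



theorem proposition3:
  fixes M N :: nat and W :: "nat \<Rightarrow> nat \<Rightarrow> quat" and H :: "nat \<Rightarrow> nat \<Rightarrow> real"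
  assumes W_HS: "\<forall>m<M. \<forall>p<2. in_HS (W m p)"
    and H_nonneg: "\<forall>p<2. \<forall>n<N. H p n \<ge> 0"
    and C1: "\<exists>m1<M. \<exists>m2<M.
        intens (W m1 0) > 0 \<and> intens (W m1 1) > 0 \<and> intens (W m2 0) > 0 \<and> intens (W m2 1) > 0 \<and>
        dop (W m1 0) = 1 \<and> dop (W m1 1) *\<^sub>R polaxis (W m1 1) \<noteq> polaxis (W m1 0) \<and>
        intens (W m1 0) \<ge> 1/2 * ((1 - (dop (W m1 1))\<^sup>2) /
            (1 - dop (W m1 1) * qinner (polaxis (W m1 0)) (polaxis (W m1 1)))) * intens (W m1 1) \<and>
        dop (W m2 1) = 1 \<and> dop (W m2 0) *\<^sub>R polaxis (W m2 0) \<noteq> polaxis (W m2 1) \<and>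
        intens (W m2 1) \<ge> 1/2 * ((1 - (dop (W m2 0))\<^sup>2) /
            (1 - dop (W m2 0) * qinner (polaxis (W m2 1)) (polaxis (W m2 0)))) * intens (W m2 0)"
    and C2: "\<exists>n1<N. \<exists>n2<N. n1 \<noteq> n2 \<and>
        H 0 n1 > 0 \<and> H 1 n1 = 0 \<and> H 1 n2 > 0 \<and> H 0 n2 = 0"
  shows "ess_unique M 2 N W H"
proof -
  from C1 obtain m1 m2 where m1: "m1 < M" and m2: "m2 < M"
    and r10: "qRe (W m1 0) > 0" and r11: "qRe (W m1 1) > 0"
    and r20: "qRe (W m2 0) > 0" and r21: "qRe (W m2 1) > 0"
    and d10: "dop (W m1 0) = 1" and p1: "dop (W m1 1) *\<^sub>R polaxis (W m1 1) \<noteq> polaxis (W m1 0)"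
    and d21: "dop (W m2 1) = 1" and p2: "dop (W m2 0) *\<^sub>R polaxis (W m2 0) \<noteq> polaxis (W m2 1)"
    by (auto simp: intens_def)
  have nm1: "\<forall>t. W m1 1 \<noteq> t *\<^sub>R W m1 0" using nonmult r10 r11 d10 p1 by blast
  have nm2: "\<forall>t. W m2 0 \<noteq> t *\<^sub>R W m2 1" using nonmult r20 r21 d21 p2 by blast
  have bd1: "norm (qIm (W m1 0)) = qRe (W m1 0)" using bd r10 d10 by blast
  have bd2: "norm (qIm (W m2 1)) = qRe (W m2 1)" using bd r21 d21 by blast
  have nz10: "W m1 0 \<noteq> 0" using r10 by (auto simp: qRe_def)
  have nz21: "W m2 1 \<noteq> 0" using r21 by (auto simp: qRe_def)
  have ind1: "\<And>k0 k1. k0 *\<^sub>R W m1 0 + k1 *\<^sub>R W m1 1 = 0 \<Longrightarrow> k0 = 0 \<and> k1 = 0"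
    using indep nz10 nm1 by blast
  have ind2: "\<And>k0 k1. k0 *\<^sub>R W m2 1 + k1 *\<^sub>R W m2 0 = 0 \<Longrightarrow> k0 = 0 \<and> k1 = 0"
    using indep nz21 nm2 by blast
  from C2 obtain n1 n2 where n1: "n1 < N" and n2: "n2 < N" and h1: "H 0 n1 > 0" "H 1 n1 = 0"
    and h2: "H 1 n2 > 0" "H 0 n2 = 0" by blast
  have two: "\<And>p::nat. p < 2 \<longleftrightarrow> p = 0 \<or> p = 1" by auto
  show ?thesis unfolding ess_unique_def
  proof (intro allI impI)
    fix W' H' assume A: "(\<forall>m<M. \<forall>p<2. in_HS (W' m p)) \<and> (\<forall>p<2. \<forall>n<N. 0 \<le> H' p n) \<and>
       (\<forall>m<M. \<forall>n<N. qmatmul 2 W' H' m n = qmatmul 2 W H m n)"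
    have WHS: "\<And>m. m < M \<Longrightarrow> in_HS (W' m 0) \<and> in_HS (W' m 1)" using A by simp
    have Hnn: "\<And>n. n < N \<Longrightarrow> H' 0 n \<ge> 0 \<and> H' 1 n \<ge> 0" using A by simp
    have X: "\<And>m n. m < M \<Longrightarrow> n < N \<Longrightarrow>
       H' 0 n *\<^sub>R W' m 0 + H' 1 n *\<^sub>R W' m 1 = H 0 n *\<^sub>R W m 0 + H 1 n *\<^sub>R W m 1"
      using A by (simp add: qmatmul2)
    define a where "a = H' 0 n1 / H 0 n1"
    define b where "b = H' 1 n1 / H 0 n1"
    define c where "c = H' 0 n2 / H 1 n2"
    define d where "d = H' 1 n2 / H 1 n2"
    have abcd: "a \<ge> 0" "b \<ge> 0" "c \<ge> 0" "d \<ge> 0"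
      using Hnn[OF n1] Hnn[OF n2] h1 h2 by (auto simp: a_def b_def c_def d_def)
    have E1: "\<And>m. m < M \<Longrightarrow> a *\<^sub>R W' m 0 + b *\<^sub>R W' m 1 = W m 0"
    proof -
      fix m assume m: "m < M"
      have "(1 / H 0 n1) *\<^sub>R (H' 0 n1 *\<^sub>R W' m 0 + H' 1 n1 *\<^sub>R W' m 1) = (1 / H 0 n1) *\<^sub>R (H 0 n1 *\<^sub>R W m 0)"
        using X[OF m n1] h1 by simp
      then show "a *\<^sub>R W' m 0 + b *\<^sub>R W' m 1 = W m 0" using h1
        by (simp add: a_def b_def scaleR_add_right)
    qed
    have E2: "\<And>m. m < M \<Longrightarrow> c *\<^sub>R W' m 0 + d *\<^sub>R W' m 1 = W m 1"
    proof -
      fix m assume m: "m < M"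
      have "(1 / H 1 n2) *\<^sub>R (H' 0 n2 *\<^sub>R W' m 0 + H' 1 n2 *\<^sub>R W' m 1) = (1 / H 1 n2) *\<^sub>R (H 1 n2 *\<^sub>R W m 1)"
        using X[OF m n2] h2 by simp
      then show "c *\<^sub>R W' m 0 + d *\<^sub>R W' m 1 = W m 1" using h2
        by (simp add: c_def d_def scaleR_add_right)
    qed
    have hs1: "in_HS (a *\<^sub>R W' m1 0)" "in_HS (b *\<^sub>R W' m1 1)"
      using WHS[OF m1] abcd HS_scale by auto
    have hs2: "in_HS (c *\<^sub>R W' m2 0)" "in_HS (d *\<^sub>R W' m2 1)"
      using WHS[OF m2] abcd HS_scale by auto
    obtain \<alpha> where al: "a *\<^sub>R W' m1 0 = \<alpha> *\<^sub>R W m1 0"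
      using extreme[OF hs1 ] E1[OF m1] bd1 by metis
    obtain \<beta> where be: "b *\<^sub>R W' m1 1 = \<beta> *\<^sub>R W m1 0"
      using extreme[OF hs1(2) hs1(1)] E1[OF m1] bd1 by (metis add.commute)
    obtain \<gamma> where ga: "c *\<^sub>R W' m2 0 = \<gamma> *\<^sub>R W m2 1"
      using extreme[OF hs2 ] E2[OF m2] bd2 by metis
    obtain \<delta> where de: "d *\<^sub>R W' m2 1 = \<delta> *\<^sub>R W m2 1"
      using extreme[OF hs2(2) hs2(1)] E2[OF m2] bd2 by (metis add.commute)
    have ab: "a * b = 0"
    proof -
      have "(a*b) *\<^sub>R W m1 1 = (a*b) *\<^sub>R (c *\<^sub>R W' m1 0 + d *\<^sub>R W' m1 1)" using E2[OF m1] by simp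
      also have "\<dots> = (c*b) *\<^sub>R (a *\<^sub>R W' m1 0) + (d*a) *\<^sub>R (b *\<^sub>R W' m1 1)"
        by (simp add: scaleR_add_right mult_ac)
      also have "\<dots> = (c*b*\<alpha> + d*a*\<beta>) *\<^sub>R W m1 0" using al be
        by (simp add: scaleR_add_left)
      finally have eq: "(a*b) *\<^sub>R W m1 1 = (c*b*\<alpha> + d*a*\<beta>) *\<^sub>R W m1 0" .
      have "(-(c*b*\<alpha> + d*a*\<beta>)) *\<^sub>R W m1 0 + (a*b) *\<^sub>R W m1 1 = 0" unfolding eq by (metis add.left_inverse scaleR_minus_left)
      then show ?thesis using ind1 by blast
    qed
    have cd: "c * d = 0"
    proof -
      have "(c*d) *\<^sub>R W m2 0 = (c*d) *\<^sub>R (a *\<^sub>R W' m2 0 + b *\<^sub>R W' m2 1)" using E1[OF m2] by simp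
      also have "\<dots> = (a*d) *\<^sub>R (c *\<^sub>R W' m2 0) + (b*c) *\<^sub>R (d *\<^sub>R W' m2 1)"
        by (simp add: scaleR_add_right mult_ac)
      also have "\<dots> = (a*d*\<gamma> + b*c*\<delta>) *\<^sub>R W m2 1" using ga de
        by (simp add: scaleR_add_left)
      finally have eq: "(c*d) *\<^sub>R W m2 0 = (a*d*\<gamma> + b*c*\<delta>) *\<^sub>R W m2 1" .
      have "(-(a*d*\<gamma> + b*c*\<delta>)) *\<^sub>R W m2 1 + (c*d) *\<^sub>R W m2 0 = 0" unfolding eq by (metis add.left_inverse scaleR_minus_left)
      then show ?thesis using ind2 by blast
    qed
    have nab: "\<not> (a = 0 \<and> b = 0)" using E1[OF m1] nz10 by auto
    have ncd: "\<not> (c = 0 \<and> d = 0)" using E2[OF m2] nz21 by auto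
    have nbd: "\<not> (b = 0 \<and> d = 0)"
    proof
      assume "b = 0 \<and> d = 0"
      then have "a \<noteq> 0" "a *\<^sub>R W' m1 0 = W m1 0" "c *\<^sub>R W' m1 0 = W m1 1"
        using nab E1[OF m1] E2[OF m1] by auto
      then have "W m1 1 = (c / a) *\<^sub>R W m1 0" by (metis scaleR_scaleR nonzero_divide_eq_eq)
      then show False using nm1 by blast
    qed
    have nac: "\<not> (a = 0 \<and> c = 0)"
    proof
      assume "a = 0 \<and> c = 0"
      then have "b \<noteq> 0" "b *\<^sub>R W' m1 1 = W m1 0" "d *\<^sub>R W' m1 1 = W m1 1"
        using nab E1[OF m1] E2[OF m1] by auto
      then have "W m1 1 = (d / b) *\<^sub>R W m1 0" by (metis scaleR_scaleR nonzero_divide_eq_eq)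
      then show False using nm1 by blast
    qed
    have cases: "(b = 0 \<and> c = 0 \<and> a > 0 \<and> d > 0) \<or> (a = 0 \<and> d = 0 \<and> b > 0 \<and> c > 0)"
    proof -
      have "a = 0 \<or> b = 0" "c = 0 \<or> d = 0" using ab cd by auto
      then show ?thesis using nab ncd nbd nac abcd by (smt (verit))
    qed
    then show "\<exists>dd \<sigma>. (\<forall>p<2. dd p > 0) \<and> \<sigma> permutes {..<2} \<and>
          (\<forall>m<M. \<forall>p<2. W' m p = dd (\<sigma> p) *\<^sub>R W m (\<sigma> p)) \<and>
          (\<forall>p<2. \<forall>n<N. H' p n = H (\<sigma> p) n / dd (\<sigma> p))"
    proof
      assume cs: "b = 0 \<and> c = 0 \<and> a > 0 \<and> d > 0"
      have W0: "W' m 0 = (1/a) *\<^sub>R W m 0" if "m < M" for m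
        using solve_sc[of a "W' m 0" "W m 0"] E1[OF that] cs by simp
      have W1: "W' m 1 = (1/d) *\<^sub>R W m 1" if "m < M" for m
        using solve_sc[of d "W' m 1" "W m 1"] E2[OF that] cs by simp
      have HH: "H' 0 n = a * H 0 n \<and> H' 1 n = d * H 1 n" if n: "n < N" for n
      proof -
        have "H' 0 n *\<^sub>R ((1/a) *\<^sub>R W m1 0) + H' 1 n *\<^sub>R ((1/d) *\<^sub>R W m1 1) = H 0 n *\<^sub>R W m1 0 + H 1 n *\<^sub>R W m1 1"
          using X[OF m1 n] W0[OF m1] W1[OF m1] by simp
        then have "(H' 0 n / a - H 0 n) *\<^sub>R W m1 0 + (H' 1 n / d - H 1 n) *\<^sub>R W m1 1 = 0"
          by (simp add: algebra_simps)
        then have "H' 0 n / a - H 0 n = 0" "H' 1 n / d - H 1 n = 0" using ind1 by blast+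
        then show ?thesis using cs by (simp add: field_simps)
      qed
      show ?thesis
        apply (rule exI[of _ "\<lambda>p. if p = 0 then 1/a else 1/d"], rule exI[of _ id])
        using cs W0 W1 HH by (auto simp: two permutes_id)
    next
      assume cs: "a = 0 \<and> d = 0 \<and> b > 0 \<and> c > 0"
      have W1: "W' m 1 = (1/b) *\<^sub>R W m 0" if "m < M" for m
        using solve_sc[of b "W' m 1" "W m 0"] E1[OF that] cs by simp
      have W0: "W' m 0 = (1/c) *\<^sub>R W m 1" if "m < M" for m
        using solve_sc[of c "W' m 0" "W m 1"] E2[OF that] cs by simp
      have HH: "H' 0 n = c * H 1 n \<and> H' 1 n = b * H 0 n" if n: "n < N" for n
      proof -
        have "H' 0 n *\<^sub>R ((1/c) *\<^sub>R W m1 1) + H' 1 n *\<^sub>R ((1/b) *\<^sub>R W m1 0) = H 0 n *\<^sub>R W m1 0 + H 1 n *\<^sub>R W m1 1"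
          using X[OF m1 n] W0[OF m1] W1[OF m1] by simp
        then have "(H' 1 n / b - H 0 n) *\<^sub>R W m1 0 + (H' 0 n / c - H 1 n) *\<^sub>R W m1 1 = 0"
          by (simp add: algebra_simps)
        then have "H' 1 n / b - H 0 n = 0" "H' 0 n / c - H 1 n = 0" using ind1 by blast+
        then show ?thesis using cs by (simp add: field_simps)
      qed
      show ?thesis
        apply (rule exI[of _ "\<lambda>p. if p = 0 then 1/b else 1/c"],
               rule exI[of _ "\<lambda>p::nat. if p = 0 then 1 else if p = 1 then 0 else p"])
        using cs W0 W1 HH perm2 by (auto simp: two)
    qed
  qed
qed

end
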